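(* Let $n\ge2$, and set $A=\bigl(\sum_{j=0}^{\lceil n/2\rceil-1}2\cdot4^j\bigr)\bmod 2^n$ (the $n$-bit integer whose bits at odd positions are $1$ and at even positions are $0$) and $B=\bigl(\sum_{j=0}^{\lceil n/2\rceil-1}4^j\bigr)\bmod 2^n$ (bits at even positions $1$, at odd positions $0$). For $x\in\{0,\dots,2^n-1\}$ let $y^{(1)}(x)=(0\dotplus x)\oplus(A\dotplus x)$ and $y^{(2)}(x)=(A\dotplus x)\oplus(B\dotplus x)$. Then the pair $(y^{(1)}(x),y^{(2)}(x))$ determines $x$ modulo $2^{n-1}$: for all $x,x'\in\{0,\dots,2^n-1\}$, if $y^{(1)}(x)=y^{(1)}(x')$ and $y^{(2)}(x)=y^{(2)}(x')$ then $x\equiv x'\pmod{2^{n-1}}$.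
   Context: $a\dotplus b=(a+b)\bmod 2^n$; $\oplus$ is bitwise XOR of $n$-bit integers. These are the queries $(\alpha,\beta)=(0,A)$ and $(\alpha,\beta)=(A,B)$ for the equation $y=(\alpha\dotplus x)\oplus(\beta\dotplus x)$. *)

theory Defs
  imports Main
begin

definition addmod :: "nat \<Rightarrow> nat \<Rightarrow> nat \<Rightarrow> nat" where
  "addmod n a b = (a + b) mod 2 ^ n"

definition ydiff :: "nat \<Rightarrow> nat \<Rightarrow> nat \<Rightarrow> nat \<Rightarrow> nat" where
  "ydiff n \<alpha> \<beta> x = xor (addmod n \<alpha> x) (addmod n \<beta> x)"

definition constA :: "nat \<Rightarrow> nat" where
  "constA n = (\<Sum>j<(n + 1) div 2. 2 * 4 ^ j) mod 2 ^ n"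

definition constB :: "nat \<Rightarrow> nat" where
  "constB n = (\<Sum>j<(n + 1) div 2. 4 ^ j) mod 2 ^ n"

end

theory Submission
  imports Defs
begin

definition g :: "nat \<Rightarrow> nat" where "g k = (\<Sum>j<k. 4^j)"

lemma g_Suc: "g (Suc k) = g k + 4^k" by (simp add: g_def)

lemma g_rec: "3 * g k + 1 = 4^k"
  by (induction k) (auto simp: g_def)

lemma g_add: "g (a+b) = g a + 4^a * g b"
  by (induction b) (auto simp: g_Suc power_add algebra_simps g_def)

lemma four_pow: "(4::nat)^t = 2^(2*t)"
  by (simp add: power_mult)

lemma constA_mod:
  assumes "m \<le> n"
  shows "constA n mod 2^m = 2 * g (m div 2)"
proof -
  define t where "t = m div 2"
  define k where "k = (n+1) div 2"
  have tk: "t \<le> k" using assms unfolding t_def k_def by simp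
  have S: "(\<Sum>j<k. 2 * 4 ^ j) = 2 * g k" by (simp add: g_def sum_distrib_left)
  have "g k = g t + 4^t * g (k - t)" using g_add[of t "k-t"] tk by simp
  hence e: "2 * g k = 2 * g t + 2^(2*t+1) * g (k - t)" by (simp add: four_pow)
  have dv: "(2::nat)^m dvd 2^(2*t+1)" using assms unfolding t_def
    by (intro le_imp_power_dvd) simp
  have "(2::nat)^(2*t) \<le> 2^m" unfolding t_def by (intro power_increasing) auto
  hence lt: "2 * g t < 2^m" using g_rec[of t] unfolding four_pow by linarith
  have "constA n mod 2^m = (2 * g k) mod 2^m"
    unfolding constA_def S k_def[symmetric]
    using mod_mod_cancel[OF le_imp_power_dvd[OF assms, where 'a=nat and a=2]] by simp
  also have "\<dots> = (2 * g t) mod 2^m"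
  proof -
    obtain q where q: "(2::nat)^(2*t+1) = 2^m * q" using dv by (auto elim: dvdE)
    show ?thesis unfolding e q by (simp add: mult.assoc)
  qed
  also have "\<dots> = 2 * g t" using lt by simp
  finally show ?thesis unfolding t_def .
qed

lemma constB_mod:
  assumes "m \<le> n"
  shows "constB n mod 2^m = g ((m+1) div 2)"
proof -
  define t where "t = (m+1) div 2"
  define k where "k = (n+1) div 2"
  have tk: "t \<le> k" using assms unfolding t_def k_def by simp
  have S: "(\<Sum>j<k. 4 ^ j) = g k" by (simp add: g_def)
  have "g k = g t + 4^t * g (k - t)" using g_add[of t "k-t"] tk by simp
  hence e: "g k = g t + 2^(2*t) * g (k - t)" by (simp add: four_pow)
  have dv: "(2::nat)^m dvd 2^(2*t)" unfolding t_def
    by (intro le_imp_power_dvd) simp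
  have "(2::nat)^(2*t) \<le> 2^(m+1)" unfolding t_def by (intro power_increasing) auto
  hence lt: "g t < 2^m" using g_rec[of t] unfolding four_pow by simp
  have "constB n mod 2^m = g k mod 2^m"
    unfolding constB_def S k_def[symmetric]
    using mod_mod_cancel[OF le_imp_power_dvd[OF assms, where 'a=nat and a=2]] by simp
  also have "\<dots> = g t mod 2^m"
  proof -
    obtain q where q: "(2::nat)^(2*t) = 2^m * q" using dv by (auto elim: dvdE)
    show ?thesis unfolding e q by (simp add: mult.assoc)
  qed
  also have "\<dots> = g t" using lt by simp
  finally show ?thesis unfolding t_def .
qed

lemma key_facts:
  assumes "Suc i \<le> n"
  shows "constA n mod 2^(Suc i) + constB n mod 2^(Suc i) + 1 = 2 * 2^i
       \<and> constA n mod 2^(Suc i) \<le> constB n mod 2^(Suc i) + 2^i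
       \<and> constB n mod 2^(Suc i) \<le> constA n mod 2^(Suc i) + 2^i"
proof (cases "even i")
  case True
  then obtain t where i: "i = 2*t" by blast
  have A: "constA n mod 2^(Suc i) = 2 * g t" using constA_mod[OF assms] i by simp
  have B: "constB n mod 2^(Suc i) = g (Suc t)" using constB_mod[OF assms] i by simp
  have u: "(2::nat)^i = 4^t" using i four_pow by simp
  show ?thesis unfolding A B g_Suc u using g_rec[of t] by simp
next
  case False
  then obtain t where i: "i = 2*t+1" by (metis oddE)
  have A: "constA n mod 2^(Suc i) = 2 * g (Suc t)" using constA_mod[OF assms] i by simp
  have B: "constB n mod 2^(Suc i) = g (Suc t)" using constB_mod[OF assms] i by simp
  have u: "2 * (2::nat)^i = 4^(Suc t)" using i four_pow[of "Suc t"] by simp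
  have "3 * g (Suc t) + 1 = 2 * 2^i" using g_rec[of "Suc t"] u by simp
  thus ?thesis unfolding A B by simp
qed

lemma bit_add_nat:
  "bit (a + b :: nat) i = odd (a div 2^i + b div 2^i + of_bool (2^i \<le> a mod 2^i + b mod 2^i))"
proof -
  have p: "(2::nat)^i > 0" by simp
  define R where "R = a mod 2^i + b mod 2^i"
  have Rl: "R < 2 ^ i + 2 ^ i"
    using mod_less_divisor[OF p, of a] mod_less_divisor[OF p, of b] unfolding R_def by linarith
  have e: "a + b = 2^i * (a div 2^i + b div 2^i) + R"
    unfolding R_def by (simp add: algebra_simps)
  have d1: "(a + b) div 2^i = (a div 2^i + b div 2^i) + R div 2^i"
    by (subst e) (simp add: p)
  have d2: "R div 2^i = of_bool (2^i \<le> R)"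
  proof (cases "2^i \<le> R")
    case True
    have "R div 2^i = 1" by (rule div_nat_eqI) (use True Rl in auto)
    thus ?thesis using True by simp
  next
    case False
    thus ?thesis by simp
  qed
  show ?thesis using d1 d2 unfolding bit_nat_def R_def by simp
qed

definition carry :: "nat \<Rightarrow> nat \<Rightarrow> nat \<Rightarrow> bool" where
  "carry a x i = (2^i \<le> x mod 2^i + a mod 2^i)"

lemma bit_addmod:
  assumes "i < n"
  shows "bit (addmod n a x) i = odd (a div 2^i + x div 2^i + of_bool (carry a x i))"
proof -
  have "bit (addmod n a x) i = bit (a + x) i"
    unfolding addmod_def using assms by (simp add: take_bit_eq_mod[symmetric] bit_take_bit_iff)
  thus ?thesis by (simp add: bit_add_nat carry_def add.commute)
qed

lemma carries_eq:
  assumes "i < n" and "x < 2^n"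
    and h1: "ydiff n 0 A x = ydiff n 0 A x'"
    and h2: "ydiff n A B x = ydiff n A B x'"
  shows "carry A x i = carry A x' i \<and> carry B x i = carry B x' i"
proof -
  have b0: "carry 0 z i = False" for z by (simp add: carry_def not_le)
  have "bit (ydiff n 0 A x) i = bit (ydiff n 0 A x') i" using h1 by simp
  hence cA: "carry A x i = carry A x' i"
    unfolding ydiff_def bit_xor_iff bit_addmod[OF assms(1)] b0
    by (cases "carry A x i"; cases "carry A x' i") auto
  have "bit (ydiff n A B x) i = bit (ydiff n A B x') i" using h2 by simp
  hence "odd (A div 2^i + x div 2^i + of_bool (carry A x i)) \<noteq> odd (B div 2^i + x div 2^i + of_bool (carry B x i)) \<longleftrightarrow>
        odd (A div 2^i + x' div 2^i + of_bool (carry A x' i)) \<noteq> odd (B div 2^i + x' div 2^i + of_bool (carry B x' i))"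
    unfolding ydiff_def bit_xor_iff bit_addmod[OF assms(1)] .
  hence "carry B x i = carry B x' i" using cA
    by (cases "carry A x' i"; cases "carry B x i"; cases "carry B x' i") auto
  with cA show ?thesis by simp
qed

lemma arith_contra:
  fixes r w P Q :: nat
  assumes "r < w" "P + Q + 1 = 2*w" "P \<le> Q + w" "Q \<le> P + w"
    "(2*w \<le> r + P) = (2*w \<le> r + w + P)" "(2*w \<le> r + Q) = (2*w \<le> r + w + Q)"
  shows False
  using assms by linarith

theorem corollary1:
  fixes n x x' :: nat
  assumes "n \<ge> 2"
    and "x < 2 ^ n" and "x' < 2 ^ n"
    and "ydiff n 0 (constA n) x = ydiff n 0 (constA n) x'"
    and "ydiff n (constA n) (constB n) x = ydiff n (constA n) (constB n) x'"
  shows "x mod 2 ^ (n - 1) = x' mod 2 ^ (n - 1)"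
proof -
  have main: "i < n \<Longrightarrow> x mod 2^i = x' mod 2^i" for i
  proof (induction i)
    case 0 then show ?case by simp
  next
    case (Suc i)
    define r where "r = x mod 2^i"
    have r': "x' mod 2^i = r" using Suc by (simp add: r_def)
    have rl: "r < 2^i" unfolding r_def by simp
    have mx: "x mod 2^(Suc i) = 2^i * (x div 2^i mod 2) + r"
      unfolding r_def by (metis mod_mult2_eq power_Suc2)
    have mx': "x' mod 2^(Suc i) = 2^i * (x' div 2^i mod 2) + r"
      unfolding r'[symmetric] by (metis mod_mult2_eq power_Suc2)
    have c: "carry (constA n) x (Suc i) = carry (constA n) x' (Suc i) \<and>
             carry (constB n) x (Suc i) = carry (constB n) x' (Suc i)"
      using carries_eq[OF Suc.prems assms(2) assms(4) assms(5)] .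
    have kf: "constA n mod 2^(Suc i) + constB n mod 2^(Suc i) + 1 = 2 * 2^i
       \<and> constA n mod 2^(Suc i) \<le> constB n mod 2^(Suc i) + 2^i
       \<and> constB n mod 2^(Suc i) \<le> constA n mod 2^(Suc i) + 2^i"
      using key_facts[of i n] Suc.prems by simp
    define P where "P = constA n mod 2^(Suc i)"
    define Q where "Q = constB n mod 2^(Suc i)"
    have cA: "(2 * 2^i \<le> 2^i * (x div 2^i mod 2) + r + P) = (2 * 2^i \<le> 2^i * (x' div 2^i mod 2) + r + P)"
      using c unfolding carry_def mx mx' P_def by simp
    have cB: "(2 * 2^i \<le> 2^i * (x div 2^i mod 2) + r + Q) = (2 * 2^i \<le> 2^i * (x' div 2^i mod 2) + r + Q)"
      using c unfolding carry_def mx mx' Q_def by simp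
    have "x div 2^i mod 2 = x' div 2^i mod 2"
    proof (rule ccontr)
      assume ne: "x div 2^i mod 2 \<noteq> x' div 2^i mod 2"
      have d: "x div 2^i mod 2 = 0 \<or> x div 2^i mod 2 = 1" by auto
      have d': "x' div 2^i mod 2 = 0 \<or> x' div 2^i mod 2 = 1" by auto
      have kf': "P + Q + 1 = 2 * 2^i" "P \<le> Q + 2^i" "Q \<le> P + 2^i"
        using kf unfolding P_def[symmetric] Q_def[symmetric] by auto
      from d d' ne have "(x div 2^i mod 2 = 0 \<and> x' div 2^i mod 2 = 1) \<or> (x div 2^i mod 2 = 1 \<and> x' div 2^i mod 2 = 0)"
        by auto
      then have "(2 * 2^i \<le> r + P) = (2 * 2^i \<le> r + 2^i + P) \<and> (2 * 2^i \<le> r + Q) = (2 * 2^i \<le> r + 2^i + Q)"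
        using cA cB by (auto simp: ac_simps)
      then show False using arith_contra[OF rl kf'] by blast
    qed
    thus ?case using mx mx' by simp
  qed
  show ?thesis using main assms(1) by simp
qed

end
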